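(* If a topological space $X$ is crowded and openly irresolvable, then every instance of the McKinsey scheme $\mathrm{M}:\ \Box\Diamond\varphi\to\Diamond\Box\varphi$ is $d$-valid in $X$.
   Context: $d$-semantics: a model on a space $X$ is a valuation of propositional variables by subsets of $X$; truth sets interpret Boolean connectives as set operations, $\Diamond\varphi$ as the derived set (set of limit points: $x$ such that every $O-\{x\}$, $O$ an open neighbourhood of $x$, meets the set) of the truth set of $\varphi$, and $\Box=\neg\Diamond\neg$. A formula is $d$-valid in $X$ if true at every point in every model on $X$. $X$ is crowded if it has no isolated points. A space is resolvable if it has two disjoint non-empty dense subsets, irresolvable otherwise; $X$ is openly irresolvable if every non-empty open subspace is irresolvable. *)

theory Defs
  imports "HOL-Analysis.Analysis"
begin

datatype 'v mform =
    MVar 'v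
  | MBot
  | MNeg "'v mform"
  | MAnd "'v mform" "'v mform"
  | MOr "'v mform" "'v mform"
  | MImp "'v mform" "'v mform"
  | MDia "'v mform"

definition MBox :: "'v mform \<Rightarrow> 'v mform" where
  "MBox \<phi> = MNeg (MDia (MNeg \<phi>))"

fun dtruth :: "'a topology \<Rightarrow> ('v \<Rightarrow> 'a set) \<Rightarrow> 'v mform \<Rightarrow> 'a set" where
  "dtruth X V (MVar p) = topspace X \<inter> V p"
| "dtruth X V MBot = {}"
| "dtruth X V (MNeg \<phi>) = topspace X - dtruth X V \<phi>"
| "dtruth X V (MAnd \<phi> \<psi>) = dtruth X V \<phi> \<inter> dtruth X V \<psi>"
| "dtruth X V (MOr \<phi> \<psi>) = dtruth X V \<phi> \<union> dtruth X V \<psi>"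
| "dtruth X V (MImp \<phi> \<psi>) = (topspace X - dtruth X V \<phi>) \<union> dtruth X V \<psi>"
| "dtruth X V (MDia \<phi>) = X derived_set_of (dtruth X V \<phi>)"

definition d_valid :: "'a topology \<Rightarrow> 'v mform \<Rightarrow> bool" where
  "d_valid X \<phi> \<longleftrightarrow> (\<forall>V. \<forall>x\<in>topspace X. x \<in> dtruth X V \<phi>)"

definition crowded :: "'a topology \<Rightarrow> bool" where
  "crowded X \<longleftrightarrow> (\<forall>x\<in>topspace X. \<not> openin X {x})"

definition resolvable :: "'a topology \<Rightarrow> bool" where
  "resolvable X \<longleftrightarrow> (\<exists>A B. A \<subseteq> topspace X \<and> B \<subseteq> topspace X \<and> A \<inter> B = {}
       \<and> A \<noteq> {} \<and> B \<noteq> {} \<and> X closure_of A = topspace X \<and> X closure_of B = topspace X)"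

definition openly_irresolvable :: "'a topology \<Rightarrow> bool" where
  "openly_irresolvable X \<longleftrightarrow>
     (\<forall>U. openin X U \<and> U \<noteq> {} \<longrightarrow> \<not> resolvable (subtopology X U))"

end

theory Submission
  imports Defs
begin

lemma dtruth_sub: "dtruth X V \<phi> \<subseteq> topspace X"
  by (induction \<phi>) (auto simp: derived_set_of_subset_topspace)

lemma key:
  assumes cr: "crowded X" and oi: "openly_irresolvable X"
    and A: "A \<subseteq> topspace X" and Q: "openin X Q" and xO: "x \<in> Q"
    and dA: "\<forall>y\<in>Q. y \<noteq> x \<longrightarrow> y \<in> X derived_set_of A"
  shows "\<exists>G. openin X G \<and> G \<noteq> {} \<and> G \<subseteq> Q \<and> G \<subseteq> A"
proof (rule ccontr)
  assume nG: "\<not> ?thesis"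
  have OT: "Q \<subseteq> topspace X" using Q by (simp add: openin_subset)
  have nx: "\<And>N. openin X N \<Longrightarrow> N \<noteq> {} \<Longrightarrow> \<exists>y\<in>N. y \<noteq> x"
  proof -
    fix N assume "openin X N" "N \<noteq> {}"
    show "\<exists>y\<in>N. y \<noteq> x"
    proof (rule ccontr)
      assume "\<not> (\<exists>y\<in>N. y \<noteq> x)"
      then have "N = {x}" using \<open>N \<noteq> {}\<close> by auto
      then show False using cr \<open>openin X N\<close> unfolding crowded_def
        using openin_subset by fastforce
    qed
  qed
  have d1: "Q \<subseteq> X closure_of (A \<inter> Q)"
  proof
    fix z assume zO: "z \<in> Q"
    show "z \<in> X closure_of (A \<inter> Q)"
      unfolding in_closure_of
    proof (intro conjI allI impI)
      show "z \<in> topspace X" using zO OT by auto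
      fix N assume N: "z \<in> N \<and> openin X N"
      then have NO: "openin X (N \<inter> Q)" using Q by auto
      then obtain y where y: "y \<in> N \<inter> Q" "y \<noteq> x" using nx[OF NO] N zO by blast
      then have "y \<in> X derived_set_of A" using dA by auto
      then obtain w where "w \<in> A" "w \<in> N \<inter> Q"
        using NO y unfolding in_derived_set_of by blast
      then show "\<exists>y. y \<in> A \<inter> Q \<and> y \<in> N" by blast
    qed
  qed
  have d2: "Q \<subseteq> X closure_of (Q - A)"
  proof
    fix z assume zO: "z \<in> Q"
    show "z \<in> X closure_of (Q - A)"
      unfolding in_closure_of
    proof (intro conjI allI impI)
      show "z \<in> topspace X" using zO OT by auto
      fix N assume N: "z \<in> N \<and> openin X N"
      then have NO: "openin X (N \<inter> Q)" using Q by auto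
      show "\<exists>y. y \<in> Q - A \<and> y \<in> N"
      proof (rule ccontr)
        assume "\<not> ?thesis"
        then have "N \<inter> Q \<subseteq> A" by auto
        then show False using nG NO N zO by blast
      qed
    qed
  qed
  have ne1: "A \<inter> Q \<noteq> {}" using d1 xO by auto
  have ne2: "Q - A \<noteq> {}" using nG Q xO by blast
  have "resolvable (subtopology X Q)"
    unfolding resolvable_def
    apply (rule exI[of _ "A \<inter> Q"], rule exI[of _ "Q - A"])
    using OT ne1 ne2 d1 d2 closure_of_subtopology_open[OF disjI1[OF Q]]
    by (auto simp: topspace_subtopology)
  moreover have "Q \<noteq> {}" using xO by auto
  ultimately show False using oi Q unfolding openly_irresolvable_def by blast
qed

theorem theorem9:
  fixes X :: "'a topology" and \<phi> :: "'v mform"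
  assumes "crowded X" and "openly_irresolvable X"
  shows "d_valid X (MImp (MBox (MDia \<phi>)) (MDia (MBox \<phi>)))"
  unfolding d_valid_def
proof (intro allI ballI)
  fix V x assume xT: "x \<in> topspace X"
  define A where "A = dtruth X V \<phi>"
  have AT: "A \<subseteq> topspace X" unfolding A_def by (rule dtruth_sub)
  show "x \<in> dtruth X V (MImp (MBox (MDia \<phi>)) (MDia (MBox \<phi>)))"
  proof (cases "x \<in> X derived_set_of (topspace X - X derived_set_of A)")
    case True
    then show ?thesis by (simp add: MBox_def A_def[symmetric] xT)
  next
    case False
    then obtain U where U: "openin X U" "x \<in> U"
      and Uc: "\<forall>y. y \<noteq> x \<and> y \<in> U \<longrightarrow> y \<notin> topspace X - X derived_set_of A"
      using xT unfolding in_derived_set_of by blast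
    have "x \<in> X derived_set_of (topspace X - X derived_set_of (topspace X - A))"
      unfolding in_derived_set_of
    proof (intro conjI allI impI)
      show "x \<in> topspace X" by fact
      fix W assume W: "x \<in> W \<and> openin X W"
      have Q: "openin X (U \<inter> W)" using W U by auto
      have dA: "\<forall>y\<in>U \<inter> W. y \<noteq> x \<longrightarrow> y \<in> X derived_set_of A"
        using Uc Q openin_subset by blast
      obtain G where G: "openin X G" "G \<noteq> {}" "G \<subseteq> U \<inter> W" "G \<subseteq> A"
        using key[OF assms AT Q _ dA] U W by blast
      obtain y where y: "y \<in> G" "y \<noteq> x"
      proof -
        have "G \<noteq> {x}" using assms(1) G(1) xT unfolding crowded_def by auto
        then show ?thesis using that G(2) by blast
      qed
      have "y \<notin> X derived_set_of (topspace X - A)"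
        using G y unfolding in_derived_set_of by blast
      moreover have "y \<in> topspace X" using G y openin_subset by blast
      ultimately show "\<exists>y'\<noteq>x. y' \<in> topspace X - X derived_set_of (topspace X - A) \<and> y' \<in> W"
        using y G by blast
    qed
    then show ?thesis by (simp add: MBox_def A_def[symmetric])
  qed
qed

end
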